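(* Assume only that each finest set $I_{j_1,\dots,j_M}$ contains at least one observed index (the set $I_{\bm y_t}$ below), together with the uniformity conditions $J_m=J$, $r'_{j_1,\dots,j_m}=r'_m$. Let $B$ be an $n\times N'$ matrix with the MRA-lp block sparsity pattern, let $D$ be an $n\times n$ diagonal matrix with nonnegative diagonal entries and $D_{ii}=0$ for $i\notin I_{\bm y_t}$, let $\Lambda_{D}=\mathbf I_{N'}+B^\top DB$, let $L_D$ be its lower triangular Cholesky factor, and let $B_D=B(L_D^{-1})^\top$. Then: (a) for $p\ge q$, the $(M+1-p,M+1-q)$th block of $\Lambda_D$ (blocks induced by the column blocks $B^M,\dots,B^0$ of $B$) has size $J^pr'_p\times J^qr'_q$ and is block diagonal with $J^q$ diagonal blocks of size $J^{p-q}r'_p\times r'_q$, entries outside them being zero; (b) with $G=(V,E)$ the undirected graph on $v_1,\dots,v_{N'}$ whose adjacency matrix has 1 at every off-diagonal position inside one of the blocks described in (a) (and symmetric counterpart) and 0 elsewhere, if $1\le j<i\le N'$ and $(v_i,v_j)\notin E$ then $L_D[i,j]=L_D^{-1}[i,j]=0$; (c) $B_D$ has zero entries at every position outside the diagonal blocks $B_{j_1,\dots,j_m}$ ($m=0,\dots,M$) of the MRA-lp pattern; (d) the number of nonzero entries in each column of $L_D$ and of $L_D^{-1}$ is $\mathcal O(N)$, $N=\sum_{m=0}^M r'_m$.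
   Context: Grid indices $I_0=\{1,\dots,n\}$; $M\ge 0$, $J\ge 2$; multi-indices $(j_1,\dots,j_m)$, $1\le j_i\le J$ (empty multi-index $0$ for $m=0$); nested index sets $I_{j_1,\dots,j_m}$ with $I_0$ at $m=0$ and $I_{j_1,\dots,j_m}$ the disjoint union of $I_{j_1,\dots,j_m,j_{m+1}}$, $j_{m+1}=1,\dots,J$; indices ordered so that lexicographically larger finest multi-indices $(j_1,\dots,j_M)$ have all their indices larger. Integers $r'_m\ge 1$; $N'=\sum_{m=0}^M J^m r'_m$. MRA-lp block sparsity pattern: $B=(B^M\;\cdots\;B^0)$, where $B^m$ is an $n$-row block diagonal matrix whose diagonal blocks $B_{j_1,\dots,j_m}$, of size $|I_{j_1,\dots,j_m}|\times r'_m$, occupy rows $I_{j_1,\dots,j_m}$, in lexicographic order of $(j_1,\dots,j_m)$, all other entries being zero (the MRA-lp output of a symmetric positive definite matrix has this form). $I_{\bm y_t}\subseteq I_0$ is the set of grid indices at which observations are available at time $t$. In the paper's non-Gaussian filter, $D$ is the diagonal matrix of negative second derivatives $-\frac{d^2}{dx_{ti}^2}\log g_{ti}(y_{ti}\mid x_{ti})$ at observed indices (assumed nonnegative), zero elsewhere. *)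

theory Defs
  imports Complex_Main
begin

text \<open>Conventions (0-based indices throughout).
  Grid indices are 0,...,n-1.  A multi-index (j_1,...,j_m) with 1 <= j_i <= J is encoded by its
  lexicographic rank  sum_i (j_i - 1) J^(m-i)  in {0..<J^m}.  The finest set of a grid index i
  is given by  cell i < J^M  (its finest multi-index, encoded); the ancestor of a finest cell c at
  level m is  c div J^(M-m).  Hence  I_{(j_1..j_m)} = {i < n. cell i div J^(M-m) = rank(j_1..j_m)}.
  Matrices are functions nat => nat => real, restricted to the stated dimensions.\<close>

text \<open>Nested partition: cell indices are monotone in the grid index (lexicographically larger
  finest multi-indices have larger grid indices), every finest cell contains an observed index.\<close>
definition mra_partition :: "nat \<Rightarrow> nat \<Rightarrow> nat \<Rightarrow> (nat \<Rightarrow> nat) \<Rightarrow> nat set \<Rightarrow> bool" where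
  "mra_partition n M J cell obs \<longleftrightarrow>
     obs \<subseteq> {..<n} \<and>
     (\<forall>i<n. cell i < J ^ M) \<and>
     (\<forall>i i'. i \<le> i' \<longrightarrow> i' < n \<longrightarrow> cell i \<le> cell i') \<and>
     (\<forall>c < J ^ M. \<exists>i\<in>obs. cell i = c)"

definition Nprime :: "nat \<Rightarrow> nat \<Rightarrow> (nat \<Rightarrow> nat) \<Rightarrow> nat" where
  "Nprime M J r = (\<Sum>m\<le>M. J ^ m * r m)"

text \<open>Columns are ordered B^M, B^{M-1}, ..., B^0; the columns of B^m start at col_start m.\<close>
definition col_start :: "nat \<Rightarrow> nat \<Rightarrow> (nat \<Rightarrow> nat) \<Rightarrow> nat \<Rightarrow> nat" where
  "col_start M J r m = (\<Sum>m'\<in>{m<..M}. J ^ m' * r m')"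

definition col_level :: "nat \<Rightarrow> nat \<Rightarrow> (nat \<Rightarrow> nat) \<Rightarrow> nat \<Rightarrow> nat" where
  "col_level M J r k = (THE m. m \<le> M \<and> col_start M J r m \<le> k \<and> k < col_start M J r m + J ^ m * r m)"

text \<open>Encoded multi-index (j_1..j_m) of the diagonal block B_{j_1..j_m} containing column k
  (within B^m the blocks come in lexicographic order, each with r'_m columns).\<close>
definition col_block :: "nat \<Rightarrow> nat \<Rightarrow> (nat \<Rightarrow> nat) \<Rightarrow> nat \<Rightarrow> nat" where
  "col_block M J r k = (k - col_start M J r (col_level M J r k)) div r (col_level M J r k)"

definition mra_lp_pattern :: "nat \<Rightarrow> nat \<Rightarrow> nat \<Rightarrow> (nat \<Rightarrow> nat) \<Rightarrow> (nat \<Rightarrow> nat)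
    \<Rightarrow> (nat \<Rightarrow> nat \<Rightarrow> real) \<Rightarrow> bool" where
  "mra_lp_pattern n M J r cell B \<longleftrightarrow>
     (\<forall>i<n. \<forall>k<Nprime M J r.
        cell i div J ^ (M - col_level M J r k) \<noteq> col_block M J r k \<longrightarrow> B i k = 0)"

text \<open>Positions (k,l) lying inside one of the diagonal blocks of part (a) (or the symmetric
  counterpart): with p = level k >= q = level l, block of k's ancestor at level q equals block of l.\<close>
definition in_block_pattern :: "nat \<Rightarrow> nat \<Rightarrow> (nat \<Rightarrow> nat) \<Rightarrow> nat \<Rightarrow> nat \<Rightarrow> bool" where
  "in_block_pattern M J r k l \<longleftrightarrow>
     (let p = col_level M J r k; q = col_level M J r l in
      if q \<le> p then col_block M J r k div J ^ (p - q) = col_block M J r l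
      else col_block M J r l div J ^ (q - p) = col_block M J r k)"

definition mra_adj :: "nat \<Rightarrow> nat \<Rightarrow> (nat \<Rightarrow> nat) \<Rightarrow> nat \<Rightarrow> nat \<Rightarrow> bool" where
  "mra_adj M J r k l \<longleftrightarrow> k \<noteq> l \<and> in_block_pattern M J r k l"

definition Lambda_D :: "nat \<Rightarrow> (nat \<Rightarrow> nat \<Rightarrow> real) \<Rightarrow> (nat \<Rightarrow> real) \<Rightarrow> nat \<Rightarrow> nat \<Rightarrow> real" where
  "Lambda_D n B d k l = (if k = l then 1 else 0) + (\<Sum>i<n. B i k * d i * B i l)"

definition cholesky_factor :: "nat \<Rightarrow> (nat \<Rightarrow> nat \<Rightarrow> real) \<Rightarrow> (nat \<Rightarrow> nat \<Rightarrow> real) \<Rightarrow> bool" where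
  "cholesky_factor N A L \<longleftrightarrow>
     (\<forall>k<N. \<forall>l<N. k < l \<longrightarrow> L k l = 0) \<and>
     (\<forall>k<N. L k k > 0) \<and>
     (\<forall>k<N. \<forall>l<N. (\<Sum>s<N. L k s * L l s) = A k l)"

definition is_inverse :: "nat \<Rightarrow> (nat \<Rightarrow> nat \<Rightarrow> real) \<Rightarrow> (nat \<Rightarrow> nat \<Rightarrow> real) \<Rightarrow> bool" where
  "is_inverse N L Linv \<longleftrightarrow>
     (\<forall>k<N. \<forall>l<N. (\<Sum>s<N. L k s * Linv s l) = (if k = l then 1 else 0)) \<and>
     (\<forall>k<N. \<forall>l<N. (\<Sum>s<N. Linv k s * L s l) = (if k = l then 1 else 0))"

definition B_D :: "nat \<Rightarrow> (nat \<Rightarrow> nat \<Rightarrow> real) \<Rightarrow> (nat \<Rightarrow> nat \<Rightarrow> real) \<Rightarrow> nat \<Rightarrow> nat \<Rightarrow> real" where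
  "B_D N B Linv i k = (\<Sum>l<N. B i l * Linv k l)"

end

theory Submission
  imports Defs
begin

definition anc :: "nat \<Rightarrow> nat \<Rightarrow> (nat \<Rightarrow> nat) \<Rightarrow> nat \<Rightarrow> nat \<Rightarrow> bool" where
  "anc M J r l k \<longleftrightarrow> col_level M J r k \<le> col_level M J r l \<and>
     col_block M J r l div J ^ (col_level M J r l - col_level M J r k) = col_block M J r k"

lemma div_pow_div: "(a::nat) div J ^ x div J ^ y = a div J ^ (x + y)"
  by (simp add: div_mult2_eq power_add)

lemma anc_refl: "anc M J r k k" by (simp add: anc_def)

lemma anc_trans: "anc M J r a b \<Longrightarrow> anc M J r b c \<Longrightarrow> anc M J r a c"
  unfolding anc_def
proof (elim conjE, intro conjI)
  assume h: "col_level M J r b \<le> col_level M J r a" "col_level M J r c \<le> col_level M J r b"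
    "col_block M J r a div J ^ (col_level M J r a - col_level M J r b) = col_block M J r b"
    "col_block M J r b div J ^ (col_level M J r b - col_level M J r c) = col_block M J r c"
  show "col_level M J r c \<le> col_level M J r a" using h by linarith
  have e: "col_level M J r a - col_level M J r c = (col_level M J r a - col_level M J r b) + (col_level M J r b - col_level M J r c)"
    using h by linarith
  show "col_block M J r a div J ^ (col_level M J r a - col_level M J r c) = col_block M J r c"
    unfolding e div_pow_div[symmetric] using h by simp
qed

lemma anc_eq_level: "col_level M J r a = col_level M J r b \<Longrightarrow> anc M J r a b \<longleftrightarrow> anc M J r b a"
  by (auto simp: anc_def)

lemma in_block_iff: "in_block_pattern M J r k l \<longleftrightarrow> anc M J r k l \<or> anc M J r l k"
  by (auto simp: in_block_pattern_def anc_def Let_def)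

lemma coanc: "anc M J r s i \<Longrightarrow> anc M J r s j \<Longrightarrow> col_level M J r i \<le> col_level M J r j \<Longrightarrow> anc M J r j i"
proof -
  assume h: "anc M J r s i" "anc M J r s j" and lv: "col_level M J r i \<le> col_level M J r j"
  let ?ls = "col_level M J r s" and ?li = "col_level M J r i" and ?lj = "col_level M J r j"
  have e: "?ls - ?li = (?ls - ?lj) + (?lj - ?li)" using h lv by (simp add: anc_def)
  have "col_block M J r j div J ^ (?lj - ?li) = col_block M J r s div J ^ (?ls - ?li)"
    using h unfolding e div_pow_div[symmetric] by (simp add: anc_def)
  also have "\<dots> = col_block M J r i" using h by (simp add: anc_def)
  finally show ?thesis using lv by (simp add: anc_def)
qed

context
  fixes M J :: nat and r :: "nat \<Rightarrow> nat"
  assumes J: "J > 0" and rpos: "\<forall>m\<le>M. r m \<ge> 1"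
begin

lemma sum_split_lb: "m \<le> M \<Longrightarrow> (\<Sum>x\<in>{m..M}. f x) = f m + (\<Sum>x\<in>{m<..M}. f x)" for f :: "nat \<Rightarrow> nat"
  by (simp add: Icc_eq_insert_lb_nat atLeastSucAtMost_greaterThanAtMost)

lemma cs_mono: "m1 < m2 \<Longrightarrow> m2 \<le> M \<Longrightarrow>
   col_start M J r m2 + J ^ m2 * r m2 \<le> col_start M J r m1"
proof -
  assume a: "m1 < m2" "m2 \<le> M"
  have "col_start M J r m2 + J ^ m2 * r m2 = (\<Sum>x\<in>{m2..M}. J^x * r x)"
    using sum_split_lb[OF a(2)] by (simp add: col_start_def)
  also have "\<dots> \<le> (\<Sum>x\<in>{m1<..M}. J^x * r x)"
    by (rule sum_mono2) (use a in auto)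
  finally show ?thesis by (simp add: col_start_def)
qed

lemma cs_N: "m \<le> M \<Longrightarrow> col_start M J r m + J ^ m * r m \<le> Nprime M J r"
proof -
  assume a: "m \<le> M"
  have "col_start M J r m + J ^ m * r m = (\<Sum>x\<in>{m..M}. J^x * r x)"
    using sum_split_lb[OF a] by (simp add: col_start_def)
  also have "\<dots> \<le> (\<Sum>x\<in>{..M}. J^x * r x)"
    by (rule sum_mono2) auto
  finally show ?thesis by (simp add: Nprime_def)
qed

lemma cs_N0: "col_start M J r 0 + r 0 = Nprime M J r"
  using sum_split_lb[of 0 "\<lambda>x. J^x * r x"] by (simp add: col_start_def Nprime_def atMost_atLeast0)

lemma cs_step: "0 < m \<Longrightarrow> m \<le> M \<Longrightarrow> col_start M J r (m - 1) = col_start M J r m + J ^ m * r m"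
proof -
  assume a: "0 < m" "m \<le> M"
  have "{m - 1<..M} = {m..M}" using a by auto
  then show ?thesis using sum_split_lb[OF a(2), of "\<lambda>x. J^x * r x"] by (simp add: col_start_def)
qed

lemma cs_M: "col_start M J r M = 0" by (simp add: col_start_def)

lemma level_unique: "m \<le> M \<Longrightarrow> col_start M J r m \<le> k \<Longrightarrow> k < col_start M J r m + J ^ m * r m
   \<Longrightarrow> col_level M J r k = m"
  unfolding col_level_def
proof (rule the_equality)
  assume "m \<le> M" "col_start M J r m \<le> k" "k < col_start M J r m + J ^ m * r m"
  then show "m \<le> M \<and> col_start M J r m \<le> k \<and> k < col_start M J r m + J ^ m * r m" by simp
next
  fix m' assume a: "m \<le> M" "col_start M J r m \<le> k" "k < col_start M J r m + J ^ m * r m"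
    and b: "m' \<le> M \<and> col_start M J r m' \<le> k \<and> k < col_start M J r m' + J ^ m' * r m'"
  show "m' = m"
  proof (rule ccontr)
    assume "m' \<noteq> m"
    then consider "m' < m" | "m < m'" by linarith
    then show False
    proof cases
      case 1 then show ?thesis using cs_mono[of m' m] a b by linarith
    next
      case 2 then show ?thesis using cs_mono[of m m'] a b by linarith
    qed
  qed
qed

lemma level_exists: "k < Nprime M J r \<Longrightarrow> \<exists>m\<le>M. col_start M J r m \<le> k \<and> k < col_start M J r m + J ^ m * r m"
proof -
  assume k: "k < Nprime M J r"
  define m where "m = (LEAST m. col_start M J r m \<le> k)"
  have ex: "col_start M J r M \<le> k" by (simp add: cs_M)
  have m1: "col_start M J r m \<le> k" unfolding m_def by (rule LeastI[where P="\<lambda>m. col_start M J r m \<le> k", OF ex])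
  have m2: "m \<le> M" unfolding m_def by (rule Least_le[where P="\<lambda>m. col_start M J r m \<le> k", OF ex])
  have "k < col_start M J r m + J ^ m * r m"
  proof (cases "m = 0")
    case True then show ?thesis using k cs_N0 by simp
  next
    case False
    have "\<not> col_start M J r (m - 1) \<le> k"
      unfolding m_def by (rule not_less_Least) (use False in \<open>simp add: m_def\<close>)
    then show ?thesis using cs_step[of m] False m2 by simp
  qed
  then show ?thesis using m1 m2 by blast
qed

lemma level_props: "k < Nprime M J r \<Longrightarrow> col_level M J r k \<le> M \<and>
   col_start M J r (col_level M J r k) \<le> k \<and>
   k < col_start M J r (col_level M J r k) + J ^ (col_level M J r k) * r (col_level M J r k)"
  using level_exists level_unique by metis

lemma level_mono: "k \<le> k' \<Longrightarrow> k' < Nprime M J r \<Longrightarrow> col_level M J r k' \<le> col_level M J r k"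
proof (rule ccontr)
  assume a: "k \<le> k'" "k' < Nprime M J r" "\<not> col_level M J r k' \<le> col_level M J r k"
  have "k < Nprime M J r" using a by simp
  then show False using level_props[of k] level_props[of k'] a cs_mono[of "col_level M J r k" "col_level M J r k'"]
    by linarith
qed

lemma block_bound: "k < Nprime M J r \<Longrightarrow> col_block M J r k < J ^ col_level M J r k"
proof -
  assume k: "k < Nprime M J r"
  note p = level_props[OF k]
  show ?thesis unfolding col_block_def
    by (rule less_mult_imp_div_less) (use p in linarith)
qed

lemma anc_lower: "l \<le> k \<Longrightarrow> k < Nprime M J r \<Longrightarrow> anc M J r k l \<Longrightarrow> anc M J r l k"
  using level_mono[of l k] anc_eq_level[of k l] by (auto simp: anc_def)

lemma coanc2: "s \<le> j \<Longrightarrow> j \<le> i \<Longrightarrow> i < Nprime M J r \<Longrightarrow> anc M J r s i \<Longrightarrow> anc M J r s j \<Longrightarrow> anc M J r j i"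
  using coanc level_mono by blast

lemma anc_cell: "anc M J r l k \<Longrightarrow> l < Nprime M J r \<Longrightarrow> (c::nat) div J ^ (M - col_level M J r l) = col_block M J r l
  \<Longrightarrow> c div J ^ (M - col_level M J r k) = col_block M J r k"
proof -
  assume a: "anc M J r l k" "l < Nprime M J r" "c div J ^ (M - col_level M J r l) = col_block M J r l"
  have e: "M - col_level M J r k = (M - col_level M J r l) + (col_level M J r l - col_level M J r k)"
    using a level_props[of l] by (simp add: anc_def)
  show ?thesis unfolding e div_pow_div[symmetric] using a by (simp add: anc_def)
qed

lemma Lambda_zero:
  assumes pat: "mra_lp_pattern n M J r cell B" and k: "k < Nprime M J r" and l: "l < Nprime M J r"
    and n1: "\<not> anc M J r k l" and n2: "\<not> anc M J r l k"
  shows "Lambda_D n B d k l = 0"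
proof -
  have kl: "k \<noteq> l" using n1 anc_refl by metis
  have "B i k * d i * B i l = 0" if i: "i < n" for i
  proof (rule ccontr)
    assume "B i k * d i * B i l \<noteq> 0"
    then have "B i k \<noteq> 0" "B i l \<noteq> 0" by auto
    then have ck: "cell i div J ^ (M - col_level M J r k) = col_block M J r k"
      and cl: "cell i div J ^ (M - col_level M J r l) = col_block M J r l"
      using pat i k l unfolding mra_lp_pattern_def by blast+
    have lk: "col_level M J r k \<le> M" "col_level M J r l \<le> M" using level_props k l by auto
    show False
    proof (cases "col_level M J r l \<le> col_level M J r k")
      case True
      have e: "M - col_level M J r l = (M - col_level M J r k) + (col_level M J r k - col_level M J r l)"
        using True lk by simp
      have "anc M J r k l" using cl unfolding e div_pow_div[symmetric] ck using True by (simp add: anc_def)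
      then show False using n1 by simp
    next
      case False
      have e: "M - col_level M J r k = (M - col_level M J r l) + (col_level M J r l - col_level M J r k)"
        using False lk by simp
      have "anc M J r l k" using ck unfolding e div_pow_div[symmetric] cl using False by (simp add: anc_def)
      then show False using n2 by simp
    qed
  qed
  then have "(\<Sum>i<n. B i k * d i * B i l) = 0" by (intro sum.neutral) auto
  then show ?thesis using kl by (simp add: Lambda_D_def)
qed

lemma sum_single_out: "finite A \<Longrightarrow> a \<in> A \<Longrightarrow> (\<And>s. s \<in> A \<Longrightarrow> s \<noteq> a \<Longrightarrow> f s = 0) \<Longrightarrow> sum f A = (f a :: real)"
  by (simp add: sum.remove sum.neutral)

lemma L_pattern:
  assumes pat: "mra_lp_pattern n M J r cell B"
    and chol: "cholesky_factor (Nprime M J r) (Lambda_D n B d) L"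
  shows "j < Nprime M J r \<Longrightarrow> i < Nprime M J r \<Longrightarrow> L i j \<noteq> 0 \<Longrightarrow> j \<le> i \<and> anc M J r j i"
proof (induction j arbitrary: i rule: less_induct)
  case (less j)
  let ?N = "Nprime M J r"
  have up: "\<And>k l. k < ?N \<Longrightarrow> l < ?N \<Longrightarrow> k < l \<Longrightarrow> L k l = 0"
    and dg: "\<And>k. k < ?N \<Longrightarrow> L k k > 0"
    and eq: "\<And>k l. k < ?N \<Longrightarrow> l < ?N \<Longrightarrow> (\<Sum>s<?N. L k s * L l s) = Lambda_D n B d k l"
    using chol unfolding cholesky_factor_def by blast+
  consider "i < j" | "i = j" | "j < i" by linarith
  then show ?case
  proof cases
    case 1 then show ?thesis using up less by blast
  next
    case 2 then show ?thesis by (simp add: anc_refl)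
  next
    case 3
    show ?thesis
    proof (rule ccontr)
      assume na: "\<not> (j \<le> i \<and> anc M J r j i)"
      then have n2: "\<not> anc M J r j i" using 3 by simp
      have n1: "\<not> anc M J r i j" using anc_lower[of j i] 3 less n2 by auto
      have "Lambda_D n B d i j = 0" using Lambda_zero[OF pat] less n1 n2 by blast
      moreover have "(\<Sum>s<?N. L i s * L j s) = L i j * L j j"
      proof (rule sum_single_out)
        fix s assume s: "s \<in> {..<?N}" "s \<noteq> j"
        show "L i s * L j s = 0"
        proof (rule ccontr)
          assume "L i s * L j s \<noteq> 0"
          then have a: "L i s \<noteq> 0" "L j s \<noteq> 0" by auto
          have "s < j" using a(2) up[of j s] s less by fastforce
          then have "anc M J r s j" "anc M J r s i" using less.IH[of s] a s less by auto
          then have "anc M J r j i" using coanc2[of s j i] \<open>s < j\<close> 3 less by auto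
          then show False using n2 by simp
        qed
      qed (use less in auto)
      ultimately have "L i j * L j j = 0" using eq[of i j] less by simp
      then show False using dg[of j] less by simp
    qed
  qed
qed

lemma Linv_pattern:
  assumes pat: "mra_lp_pattern n M J r cell B"
    and chol: "cholesky_factor (Nprime M J r) (Lambda_D n B d) L"
    and inv: "is_inverse (Nprime M J r) L Linv"
  shows "k < Nprime M J r \<Longrightarrow> l < Nprime M J r \<Longrightarrow> Linv k l \<noteq> 0 \<Longrightarrow> l \<le> k \<and> anc M J r l k"
proof (induction k rule: less_induct)
  case (less k)
  let ?N = "Nprime M J r"
  have dg: "\<And>k. k < ?N \<Longrightarrow> L k k > 0"
    using chol unfolding cholesky_factor_def by blast
  have eq: "\<And>k l. k < ?N \<Longrightarrow> l < ?N \<Longrightarrow> (\<Sum>s<?N. L k s * Linv s l) = (if k = l then 1 else 0)"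
    using inv unfolding is_inverse_def by blast
  show ?case
  proof (rule ccontr)
    assume na: "\<not> (l \<le> k \<and> anc M J r l k)"
    then have kl: "k \<noteq> l" using anc_refl by auto
    have "(\<Sum>s<?N. L k s * Linv s l) = L k k * Linv k l"
    proof (rule sum_single_out)
      fix s assume s: "s \<in> {..<?N}" "s \<noteq> k"
      show "L k s * Linv s l = 0"
      proof (rule ccontr)
        assume "L k s * Linv s l \<noteq> 0"
        then have a: "L k s \<noteq> 0" "Linv s l \<noteq> 0" by auto
        have b: "s \<le> k" "anc M J r s k" using L_pattern[OF pat chol, of s k] a s less by auto
        then have "s < k" using s by simp
        then have "l \<le> s" "anc M J r l s" using less.IH[of s] a less by auto
        then show False using na b anc_trans by fastforce
      qed
    qed (use less in auto)
    then have "L k k * Linv k l = 0" using eq[of k l] less kl by simp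
    then show False using dg[of k] less by simp
  qed
qed

lemma level_set: "p \<le> M \<Longrightarrow> {k. k < Nprime M J r \<and> col_level M J r k = p} =
   {col_start M J r p ..< col_start M J r p + J ^ p * r p}"
proof -
  assume p: "p \<le> M"
  show ?thesis
  proof (intro set_eqI iffI)
    fix k assume "k \<in> {k. k < Nprime M J r \<and> col_level M J r k = p}"
    then show "k \<in> {col_start M J r p ..< col_start M J r p + J ^ p * r p}"
      using level_props[of k] by auto
  next
    fix k assume k: "k \<in> {col_start M J r p ..< col_start M J r p + J ^ p * r p}"
    then show "k \<in> {k. k < Nprime M J r \<and> col_level M J r k = p}"
      using level_unique[OF p, of k] cs_N[OF p] by auto
  qed
qed

lemma div_range: "0 < (R::nat) \<Longrightarrow> x div R = t \<longleftrightarrow> t * R \<le> x \<and> x < t * R + R"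
proof
  assume R: "0 < R" and "x div R = t"
  moreover have "x = x div R * R + x mod R" by simp
  moreover have "x mod R < R" using R by simp
  ultimately show "t * R \<le> x \<and> x < t * R + R" by (metis add_less_cancel_left le_add1)
next
  assume "0 < R" "t * R \<le> x \<and> x < t * R + R"
  then show "x div R = t" by (intro div_nat_eqI) (auto simp: mult.commute)
qed

lemma count_set:
  assumes qp: "q \<le> p" and pM: "p \<le> M" and t: "t < J ^ q"
  shows "{k. k < Nprime M J r \<and> col_level M J r k = p \<and> col_block M J r k div J ^ (p - q) = t} =
    {col_start M J r p + t * (r p * J ^ (p - q)) ..< col_start M J r p + t * (r p * J ^ (p - q)) + r p * J ^ (p - q)}"
    (is "?L = {?a ..< ?a + ?R}")
proof -
  let ?cs = "col_start M J r p"
  have rp: "0 < r p" using rpos pM by (simp add: Suc_le_eq)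
  have R: "0 < ?R" using rp J by simp
  have bd: "t * ?R + ?R \<le> J ^ p * r p"
  proof -
    have "t * ?R + ?R = (t + 1) * J ^ (p - q) * r p" by (simp add: algebra_simps)
    also have "\<dots> \<le> J ^ q * J ^ (p - q) * r p" using t by (intro mult_right_mono) auto
    also have "\<dots> = J ^ p * r p" using qp by (simp add: power_add[symmetric])
    finally show ?thesis .
  qed
  have blk: "col_block M J r k div J ^ (p - q) = (k - ?cs) div ?R" if "col_level M J r k = p" for k
    using that by (simp add: col_block_def div_mult2_eq)
  show ?thesis
  proof (intro set_eqI iffI)
    fix k assume "k \<in> ?L"
    then have k: "k < Nprime M J r" "col_level M J r k = p" "(k - ?cs) div ?R = t" using blk by auto
    have "?cs \<le> k" using level_props[OF k(1)] k(2) by simp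
    moreover have "t * ?R \<le> k - ?cs \<and> k - ?cs < t * ?R + ?R" using k(3) div_range[OF R] by blast
    ultimately show "k \<in> {?a ..< ?a + ?R}" by auto
  next
    fix k assume k: "k \<in> {?a ..< ?a + ?R}"
    have lv: "col_level M J r k = p" using level_unique[OF pM, of k] k bd by auto
    have "k < Nprime M J r" using k bd cs_N[OF pM] by auto
    moreover have "(k - ?cs) div ?R = t" using k div_range[OF R, of "k - ?cs" t] by auto
    ultimately show "k \<in> ?L" using lv blk by auto
  qed
qed

lemma card_count: "q \<le> p \<Longrightarrow> p \<le> M \<Longrightarrow> t < J ^ q \<Longrightarrow>
  card {k. k < Nprime M J r \<and> col_level M J r k = p \<and> col_block M J r k div J ^ (p - q) = t} = J ^ (p - q) * r p"
  by (simp add: count_set)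

lemma card_block: "q \<le> M \<Longrightarrow> t < J ^ q \<Longrightarrow>
  card {l. l < Nprime M J r \<and> col_level M J r l = q \<and> col_block M J r l = t} = r q"
  using card_count[of q q t] by simp

lemma card_anc: "j < Nprime M J r \<Longrightarrow> card {i. i < Nprime M J r \<and> anc M J r j i} \<le> (\<Sum>m\<le>M. r m)"
proof -
  assume j: "j < Nprime M J r"
  let ?lj = "col_level M J r j" and ?bj = "col_block M J r j"
  define S where "S m = {l. l < Nprime M J r \<and> col_level M J r l = m \<and> col_block M J r l = ?bj div J ^ (?lj - m)}" for m
  have sub: "{i. i < Nprime M J r \<and> anc M J r j i} \<subseteq> (\<Union>m\<in>{..M}. S m)"
  proof
    fix i assume "i \<in> {i. i < Nprime M J r \<and> anc M J r j i}"
    then have i: "i < Nprime M J r" "anc M J r j i" by auto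
    have "col_level M J r i \<le> M" using level_props[OF i(1)] by simp
    then show "i \<in> (\<Union>m\<in>{..M}. S m)" using i unfolding S_def anc_def by auto
  qed
  have cS: "card (S m) \<le> r m" if m: "m \<in> {..M}" for m
  proof (cases "m \<le> ?lj")
    case True
    have "?bj < J ^ m * J ^ (?lj - m)" using block_bound[OF j] True by (simp add: power_add[symmetric])
    then have "?bj div J ^ (?lj - m) < J ^ m" by (rule less_mult_imp_div_less)
    then show ?thesis unfolding S_def using card_block[of m] m by simp
  next
    case False
    have "?bj < J ^ ?lj" using block_bound[OF j] .
    also have "\<dots> \<le> J ^ m" using False J by (intro power_increasing) auto
    finally have "?bj div J ^ (?lj - m) < J ^ m" using False by simp
    then show ?thesis unfolding S_def using card_block[of m] m by simp
  qed
  have "card {i. i < Nprime M J r \<and> anc M J r j i} \<le> card (\<Union>m\<in>{..M}. S m)"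
    by (rule card_mono[OF _ sub]) (auto simp: S_def)
  also have "\<dots> \<le> (\<Sum>m\<le>M. card (S m))" by (rule card_UN_le) simp
  also have "\<dots> \<le> (\<Sum>m\<le>M. r m)" by (rule sum_mono) (rule cS)
  finally show ?thesis .
qed

lemma BD_zero:
  assumes pat: "mra_lp_pattern n M J r cell B"
    and chol: "cholesky_factor (Nprime M J r) (Lambda_D n B d) L"
    and inv: "is_inverse (Nprime M J r) L Linv"
    and i: "i < n" and k: "k < Nprime M J r"
    and ne: "cell i div J ^ (M - col_level M J r k) \<noteq> col_block M J r k"
  shows "B_D (Nprime M J r) B Linv i k = 0"
proof -
  have "B i l * Linv k l = 0" if l: "l < Nprime M J r" for l
  proof (rule ccontr)
    assume "B i l * Linv k l \<noteq> 0"
    then have a: "B i l \<noteq> 0" "Linv k l \<noteq> 0" by auto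
    have "cell i div J ^ (M - col_level M J r l) = col_block M J r l"
      using pat i l a(1) unfolding mra_lp_pattern_def by blast
    moreover have "anc M J r l k" using Linv_pattern[OF pat chol inv k l a(2)] by simp
    ultimately show False using anc_cell[of l k "cell i"] l ne by simp
  qed
  then show ?thesis unfolding B_D_def by (intro sum.neutral) auto
qed

end

theorem proposition5:
  shows "\<exists>C::real. \<forall>(n::nat) (M::nat) (J::nat) (r::nat \<Rightarrow> nat) (cell::nat \<Rightarrow> nat) (obs::nat set)
      (B::nat \<Rightarrow> nat \<Rightarrow> real) (d::nat \<Rightarrow> real) (L::nat \<Rightarrow> nat \<Rightarrow> real) (Linv::nat \<Rightarrow> nat \<Rightarrow> real).
    J \<ge> 2 \<longrightarrow> (\<forall>m\<le>M. r m \<ge> 1) \<longrightarrow>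
    mra_partition n M J cell obs \<longrightarrow>
    mra_lp_pattern n M J r cell B \<longrightarrow>
    (\<forall>i<n. d i \<ge> 0) \<longrightarrow> (\<forall>i<n. i \<notin> obs \<longrightarrow> d i = 0) \<longrightarrow>
    cholesky_factor (Nprime M J r) (Lambda_D n B d) L \<longrightarrow>
    is_inverse (Nprime M J r) L Linv \<longrightarrow>
    \<comment> \<open>(a)\<close>
    (\<forall>p q. q \<le> p \<longrightarrow> p \<le> M \<longrightarrow>
        card {k. k < Nprime M J r \<and> col_level M J r k = p} = J ^ p * r p \<and>
        card {l. l < Nprime M J r \<and> col_level M J r l = q} = J ^ q * r q \<and>
        (\<forall>t < J ^ q.
           card {k. k < Nprime M J r \<and> col_level M J r k = p \<and>
                    col_block M J r k div J ^ (p - q) = t} = J ^ (p - q) * r p \<and>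
           card {l. l < Nprime M J r \<and> col_level M J r l = q \<and> col_block M J r l = t} = r q) \<and>
        (\<forall>k < Nprime M J r. \<forall>l < Nprime M J r.
           col_level M J r k = p \<longrightarrow> col_level M J r l = q \<longrightarrow>
           col_block M J r k div J ^ (p - q) \<noteq> col_block M J r l \<longrightarrow>
           Lambda_D n B d k l = 0)) \<and>
    \<comment> \<open>(b)\<close>
    (\<forall>i j. j < i \<longrightarrow> i < Nprime M J r \<longrightarrow> \<not> mra_adj M J r i j \<longrightarrow>
        L i j = 0 \<and> Linv i j = 0) \<and>
    \<comment> \<open>(c)\<close>
    (\<forall>i<n. \<forall>k < Nprime M J r.
        cell i div J ^ (M - col_level M J r k) \<noteq> col_block M J r k \<longrightarrow>
        B_D (Nprime M J r) B Linv i k = 0) \<and>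
    \<comment> \<open>(d)\<close>
    (\<forall>j < Nprime M J r.
        real (card {i. i < Nprime M J r \<and> L i j \<noteq> 0}) \<le> C * real (\<Sum>m\<le>M. r m) \<and>
        real (card {i. i < Nprime M J r \<and> Linv i j \<noteq> 0}) \<le> C * real (\<Sum>m\<le>M. r m))"
proof (rule exI[of _ 1], intro allI impI)
  fix n M J :: nat and r cell :: "nat \<Rightarrow> nat" and obs :: "nat set" and B L Linv :: "nat \<Rightarrow> nat \<Rightarrow> real"
    and d :: "nat \<Rightarrow> real"
  assume J2: "J \<ge> 2" and rpos: "\<forall>m\<le>M. r m \<ge> 1" and "mra_partition n M J cell obs"
    and pat: "mra_lp_pattern n M J r cell B" and "\<forall>i<n. d i \<ge> 0" and "\<forall>i<n. i \<notin> obs \<longrightarrow> d i = 0"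
    and chol: "cholesky_factor (Nprime M J r) (Lambda_D n B d) L"
    and inv: "is_inverse (Nprime M J r) L Linv"
  have J: "J > 0" using J2 by simp
  let ?N = "Nprime M J r"
  have A: "\<forall>p q. q \<le> p \<longrightarrow> p \<le> M \<longrightarrow>
        card {k. k < ?N \<and> col_level M J r k = p} = J ^ p * r p \<and>
        card {l. l < ?N \<and> col_level M J r l = q} = J ^ q * r q \<and>
        (\<forall>t < J ^ q.
           card {k. k < ?N \<and> col_level M J r k = p \<and>
                    col_block M J r k div J ^ (p - q) = t} = J ^ (p - q) * r p \<and>
           card {l. l < ?N \<and> col_level M J r l = q \<and> col_block M J r l = t} = r q) \<and>
        (\<forall>k < ?N. \<forall>l < ?N.
           col_level M J r k = p \<longrightarrow> col_level M J r l = q \<longrightarrow>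
           col_block M J r k div J ^ (p - q) \<noteq> col_block M J r l \<longrightarrow>
           Lambda_D n B d k l = 0)"
  proof (intro allI impI conjI)
    fix p q t k l assume qp: "q \<le> p" and pM: "p \<le> M"
    show "card {k. k < ?N \<and> col_level M J r k = p} = J ^ p * r p"
      using level_set[OF J rpos pM] by simp
    show "card {l. l < ?N \<and> col_level M J r l = q} = J ^ q * r q"
      using level_set[OF J rpos, of q] qp pM by simp
    { assume t: "t < J ^ q"
      show "card {k. k < ?N \<and> col_level M J r k = p \<and> col_block M J r k div J ^ (p - q) = t} = J ^ (p - q) * r p"
        using card_count[OF J rpos qp pM t] .
      show "card {l. l < ?N \<and> col_level M J r l = q \<and> col_block M J r l = t} = r q"
        using card_block[OF J rpos _ t] qp pM by simp }
    assume k: "k < ?N" and l: "l < ?N" and lk: "col_level M J r k = p" and ll: "col_level M J r l = q"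
      and ne: "col_block M J r k div J ^ (p - q) \<noteq> col_block M J r l"
    have n1: "\<not> anc M J r k l" using ne lk ll by (simp add: anc_def)
    have n2: "\<not> anc M J r l k"
    proof
      assume "anc M J r l k"
      then have "p = q" "col_block M J r l = col_block M J r k" using lk ll qp by (auto simp: anc_def)
      then show False using ne by simp
    qed
    show "Lambda_D n B d k l = 0" using Lambda_zero[OF J rpos pat k l n1 n2] .
  qed
  have Bp: "\<forall>i j. j < i \<longrightarrow> i < ?N \<longrightarrow> \<not> mra_adj M J r i j \<longrightarrow> L i j = 0 \<and> Linv i j = 0"
  proof (intro allI impI)
    fix i j assume ji: "j < i" and i: "i < ?N" and na: "\<not> mra_adj M J r i j"
    have "\<not> anc M J r j i" using na ji by (simp add: mra_adj_def in_block_iff)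
    then show "L i j = 0 \<and> Linv i j = 0"
      using L_pattern[OF J rpos pat chol, of j i] Linv_pattern[OF J rpos pat chol inv, of i j] ji i by auto
  qed
  have Cp: "\<forall>i<n. \<forall>k < ?N. cell i div J ^ (M - col_level M J r k) \<noteq> col_block M J r k \<longrightarrow>
        B_D ?N B Linv i k = 0"
    using BD_zero[OF J rpos pat chol inv] by blast
  have Dp: "\<forall>j < ?N.
        real (card {i. i < ?N \<and> L i j \<noteq> 0}) \<le> 1 * real (\<Sum>m\<le>M. r m) \<and>
        real (card {i. i < ?N \<and> Linv i j \<noteq> 0}) \<le> 1 * real (\<Sum>m\<le>M. r m)"
  proof (intro allI impI conjI)
    fix j assume j: "j < ?N"
    have fin: "finite {i. i < ?N \<and> anc M J r j i}" by simp
    have "card {i. i < ?N \<and> L i j \<noteq> 0} \<le> card {i. i < ?N \<and> anc M J r j i}"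
      by (rule card_mono[OF fin]) (use L_pattern[OF J rpos pat chol, of j] j in auto)
    also have "\<dots> \<le> (\<Sum>m\<le>M. r m)" using card_anc[OF J rpos j] .
    finally show "real (card {i. i < ?N \<and> L i j \<noteq> 0}) \<le> 1 * real (\<Sum>m\<le>M. r m)"
      by (simp only: of_nat_le_iff mult_1)
    have "card {i. i < ?N \<and> Linv i j \<noteq> 0} \<le> card {i. i < ?N \<and> anc M J r j i}"
      by (rule card_mono[OF fin]) (use Linv_pattern[OF J rpos pat chol inv, of _ j] j in auto)
    also have "\<dots> \<le> (\<Sum>m\<le>M. r m)" using card_anc[OF J rpos j] .
    finally show "real (card {i. i < ?N \<and> Linv i j \<noteq> 0}) \<le> 1 * real (\<Sum>m\<le>M. r m)"
      by (simp only: of_nat_le_iff mult_1)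
  qed
  show "
\<comment> \<open>(a)\<close>
    (\<forall>p q. q \<le> p \<longrightarrow> p \<le> M \<longrightarrow>
        card {k. k < Nprime M J r \<and> col_level M J r k = p} = J ^ p * r p \<and>
        card {l. l < Nprime M J r \<and> col_level M J r l = q} = J ^ q * r q \<and>
        (\<forall>t < J ^ q.
           card {k. k < Nprime M J r \<and> col_level M J r k = p \<and>
                    col_block M J r k div J ^ (p - q) = t} = J ^ (p - q) * r p \<and>
           card {l. l < Nprime M J r \<and> col_level M J r l = q \<and> col_block M J r l = t} = r q) \<and>
        (\<forall>k < Nprime M J r. \<forall>l < Nprime M J r.
           col_level M J r k = p \<longrightarrow> col_level M J r l = q \<longrightarrow>
           col_block M J r k div J ^ (p - q) \<noteq> col_block M J r l \<longrightarrow>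
           Lambda_D n B d k l = 0)) \<and>
    \<comment> \<open>(b)\<close>
    (\<forall>i j. j < i \<longrightarrow> i < Nprime M J r \<longrightarrow> \<not> mra_adj M J r i j \<longrightarrow>
        L i j = 0 \<and> Linv i j = 0) \<and>
    \<comment> \<open>(c)\<close>
    (\<forall>i<n. \<forall>k < Nprime M J r.
        cell i div J ^ (M - col_level M J r k) \<noteq> col_block M J r k \<longrightarrow>
        B_D (Nprime M J r) B Linv i k = 0) \<and>
    \<comment> \<open>(d)\<close>
    (\<forall>j < Nprime M J r.
        real (card {i. i < Nprime M J r \<and> L i j \<noteq> 0}) \<le> 1 * real (\<Sum>m\<le>M. r m) \<and>
        real (card {i. i < Nprime M J r \<and> Linv i j \<noteq> 0}) \<le> 1 * real (\<Sum>m\<le>M. r m))"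
    by (rule conjI[OF A conjI[OF Bp conjI[OF Cp Dp]]])
qed

end
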